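(* Let $\models$ be an intersective mixed consequence truth-relation on a finite set $V$ of truth values, with induced consequence relation $\vdash$ in a constant expressive setting. The following are equivalent: (i) $\vdash$ admits a G-disjunction; (ii) every minimal representation of $\models$ is based on a disjunction-compatible list of sets of designated values; (iii) some representation of $\models$ is based on a disjunction-compatible list of sets of designated values.
   Context: $V$ contains distinct $1,0$; sets of designated values: $\mathcal{D}\subseteq V$, $1\in\mathcal{D}$, $0\notin\mathcal{D}$. $\gamma\models_{\mathcal{D}_p,\mathcal{D}_c}\delta$ iff ($\gamma\subseteq\mathcal{D}_p\Rightarrow\delta\cap\mathcal{D}_c\neq\emptyset$). An intersective mixed truth-relation is $\models_{\mathcal{D}_p^1,\mathcal{D}_c^1}\cap\dots\cap\models_{\mathcal{D}_p^K,\mathcal{D}_c^K}$; such a list is a representation, based on the list of sets $\mathcal{D}_p^1,\mathcal{D}_c^1,\dots,\mathcal{D}_p^K,\mathcal{D}_c^K$; it is minimal if $K$ is least possible. A list $\mathcal{D}_1,\dots,\mathcal{D}_n$ is disjunction-compatible if for all $x,y\in V$ there is $z\in V$ such that for every $i$: $z\in\mathcal{D}_i$ iff ($x\in\mathcal{D}_i$ or $y\in\mathcal{D}_i$). Semantics: valuations mapping atoms to $V$, connectives interpreted by fixed truth functions, extended compositionally, every assignment to finitely many distinct atoms realized; constant expressive: every value is the constant value of some formula. $\Gamma\vdash\Delta$ iff $v(\Gamma)\models v(\Delta)$ for all $v$. A G-disjunction is a binary connective $\vee$ (interpreted by some truth function) with, for all $\Gamma,\Delta,A,B$: $\Gamma\vdash\{A\vee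 B\}\cup\Delta$ iff $\Gamma\vdash\{A,B\}\cup\Delta$; and $\Gamma\cup\{A\vee B\}\vdash\Delta$ iff ($\Gamma\cup\{A\}\vdash\Delta$ and $\Gamma\cup\{B\}\vdash\Delta$). *)

theory Defs
  imports Main
begin

definition designated :: "'v set \<Rightarrow> 'v \<Rightarrow> 'v \<Rightarrow> 'v set \<Rightarrow> bool" where
  "designated V one zero D \<longleftrightarrow> D \<subseteq> V \<and> one \<in> D \<and> zero \<notin> D"

definition mixed_sat :: "'v set \<Rightarrow> 'v set \<Rightarrow> 'v set \<Rightarrow> 'v set \<Rightarrow> bool" where
  "mixed_sat Dp Dc \<gamma> \<delta> \<longleftrightarrow> (\<gamma> \<subseteq> Dp \<longrightarrow> \<delta> \<inter> Dc \<noteq> {})"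

definition is_rep :: "'v set \<Rightarrow> 'v \<Rightarrow> 'v \<Rightarrow> ('v set \<Rightarrow> 'v set \<Rightarrow> bool)
                      \<Rightarrow> ('v set \<times> 'v set) list \<Rightarrow> bool" where
  "is_rep V one zero R L \<longleftrightarrow>
     L \<noteq> [] \<and>
     (\<forall>k < length L. designated V one zero (fst (L ! k)) \<and> designated V one zero (snd (L ! k))) \<and>
     (\<forall>\<gamma> \<delta>. \<gamma> \<subseteq> V \<longrightarrow> \<delta> \<subseteq> V \<longrightarrow>
        (R \<gamma> \<delta> \<longleftrightarrow> (\<forall>k < length L. mixed_sat (fst (L ! k)) (snd (L ! k)) \<gamma> \<delta>)))"

definition intersective_mixed :: "'v set \<Rightarrow> 'v \<Rightarrow> 'v \<Rightarrow> ('v set \<Rightarrow> 'v set \<Rightarrow> bool) \<Rightarrow> bool" where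
  "intersective_mixed V one zero R \<longleftrightarrow> (\<exists>L. is_rep V one zero R L)"

definition minimal_rep :: "'v set \<Rightarrow> 'v \<Rightarrow> 'v \<Rightarrow> ('v set \<Rightarrow> 'v set \<Rightarrow> bool)
                      \<Rightarrow> ('v set \<times> 'v set) list \<Rightarrow> bool" where
  "minimal_rep V one zero R L \<longleftrightarrow>
     is_rep V one zero R L \<and> (\<forall>L'. is_rep V one zero R L' \<longrightarrow> length L \<le> length L')"

definition based_list :: "('v set \<times> 'v set) list \<Rightarrow> 'v set list" where
  "based_list L = concat (map (\<lambda>(p, c). [p, c]) L)"

definition disj_compatible :: "'v set \<Rightarrow> 'v set list \<Rightarrow> bool" where
  "disj_compatible V Ds \<longleftrightarrow>
     (\<forall>x\<in>V. \<forall>y\<in>V. \<exists>z\<in>V. \<forall>i < length Ds. (z \<in> Ds ! i \<longleftrightarrow> (x \<in> Ds ! i \<or> y \<in> Ds ! i)))"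

datatype 'c fm = Atom nat | App 'c "'c fm list"

fun wf :: "('c \<Rightarrow> nat) \<Rightarrow> 'c fm \<Rightarrow> bool" where
  "wf ar (Atom n) = True"
| "wf ar (App c As) = (length As = ar c \<and> (\<forall>A\<in>set As. wf ar A))"

fun eval :: "('c \<Rightarrow> 'v list \<Rightarrow> 'v) \<Rightarrow> (nat \<Rightarrow> 'v) \<Rightarrow> 'c fm \<Rightarrow> 'v" where
  "eval I v (Atom n) = v n"
| "eval I v (App c As) = I c (map (eval I v) As)"

definition truth_functional :: "'v set \<Rightarrow> ('c \<Rightarrow> nat) \<Rightarrow> ('c \<Rightarrow> 'v list \<Rightarrow> 'v) \<Rightarrow> bool" where
  "truth_functional V ar I \<longleftrightarrow>
     (\<forall>c xs. length xs = ar c \<longrightarrow> set xs \<subseteq> V \<longrightarrow> I c xs \<in> V)"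

text \<open>Valuations: all maps from atoms to V (so every assignment to finitely many atoms is realized).\<close>
definition valuation :: "'v set \<Rightarrow> (nat \<Rightarrow> 'v) \<Rightarrow> bool" where
  "valuation V v \<longleftrightarrow> (\<forall>n. v n \<in> V)"

definition constant_expressive :: "'v set \<Rightarrow> ('c \<Rightarrow> nat) \<Rightarrow> ('c \<Rightarrow> 'v list \<Rightarrow> 'v) \<Rightarrow> bool" where
  "constant_expressive V ar I \<longleftrightarrow>
     (\<forall>x\<in>V. \<exists>A. wf ar A \<and> (\<forall>v. valuation V v \<longrightarrow> eval I v A = x))"

definition conseq :: "'v set \<Rightarrow> ('c \<Rightarrow> 'v list \<Rightarrow> 'v) \<Rightarrow> ('v set \<Rightarrow> 'v set \<Rightarrow> bool)
                      \<Rightarrow> 'c fm set \<Rightarrow> 'c fm set \<Rightarrow> bool" where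
  "conseq V I R \<Gamma> \<Delta> \<longleftrightarrow> (\<forall>v. valuation V v \<longrightarrow> R (eval I v ` \<Gamma>) (eval I v ` \<Delta>))"

text \<open>The language extended with a new binary connective (None) interpreted by the truth function f.\<close>
fun ext_ar :: "('c \<Rightarrow> nat) \<Rightarrow> 'c option \<Rightarrow> nat" where
  "ext_ar ar None = 2"
| "ext_ar ar (Some c) = ar c"

fun ext_I :: "('c \<Rightarrow> 'v list \<Rightarrow> 'v) \<Rightarrow> ('v \<Rightarrow> 'v \<Rightarrow> 'v) \<Rightarrow> 'c option \<Rightarrow> 'v list \<Rightarrow> 'v" where
  "ext_I I f None xs = f (xs ! 0) (xs ! 1)"
| "ext_I I f (Some c) xs = I c xs"

definition Disj :: "'c option fm \<Rightarrow> 'c option fm \<Rightarrow> 'c option fm" where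
  "Disj A B = App None [A, B]"

definition admits_G_disjunction :: "'v set \<Rightarrow> ('v set \<Rightarrow> 'v set \<Rightarrow> bool)
                      \<Rightarrow> ('c \<Rightarrow> nat) \<Rightarrow> ('c \<Rightarrow> 'v list \<Rightarrow> 'v) \<Rightarrow> bool" where
  "admits_G_disjunction V R ar I \<longleftrightarrow>
     (\<exists>f. (\<forall>x\<in>V. \<forall>y\<in>V. f x y \<in> V) \<and>
       (\<forall>\<Gamma> \<Delta> A B. (\<forall>C\<in>\<Gamma>. wf (ext_ar ar) C) \<longrightarrow> (\<forall>C\<in>\<Delta>. wf (ext_ar ar) C) \<longrightarrow>
          wf (ext_ar ar) A \<longrightarrow> wf (ext_ar ar) B \<longrightarrow>
          (conseq V (ext_I I f) R \<Gamma> ({Disj A B} \<union> \<Delta>) \<longleftrightarrow> conseq V (ext_I I f) R \<Gamma> ({A, B} \<union> \<Delta>)) \<and>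
          (conseq V (ext_I I f) R (\<Gamma> \<union> {Disj A B}) \<Delta> \<longleftrightarrow>
             (conseq V (ext_I I f) R (\<Gamma> \<union> {A}) \<Delta> \<and> conseq V (ext_I I f) R (\<Gamma> \<union> {B}) \<Delta>))))"

end

theory Submission
  imports Defs
begin


fun lift :: "'c fm \<Rightarrow> 'c option fm" where
  "lift (Atom n) = Atom n"
| "lift (App c As) = App (Some c) (map lift As)"

lemma wf_lift: "wf ar A \<Longrightarrow> wf (ext_ar ar) (lift A)"
  by (induction A) auto

lemma eval_lift: "eval (ext_I I f) v (lift A) = eval I v A"
  by (induction A) (auto cong: map_cong)

lemma eval_in_V:
  assumes "truth_functional V ar I" "\<forall>x\<in>V. \<forall>y\<in>V. f x y \<in> V" "valuation V v"
  shows "wf (ext_ar ar) A \<Longrightarrow> eval (ext_I I f) v A \<in> V"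
proof (induction A)
  case (Atom n) then show ?case using assms(3) by (simp add: valuation_def)
next
  case (App c As)
  show ?case
  proof (cases c)
    case None
    then obtain a b where ab: "As = [a,b]" using App.prems
      by (auto simp: length_Suc_conv numeral_2_eq_2)
    then show ?thesis using App None assms(2) by auto
  next
    case (Some d)
    have "set (map (eval (ext_I I f) v) As) \<subseteq> V" using App by auto
    then show ?thesis using App.prems Some assms(1) unfolding truth_functional_def by auto
  qed
qed

lemma is_rep_set: "is_rep V one zero R L \<longleftrightarrow> L \<noteq> [] \<and>
  (\<forall>pc\<in>set L. designated V one zero (fst pc) \<and> designated V one zero (snd pc)) \<and>
  (\<forall>\<gamma> \<delta>. \<gamma>\<subseteq>V \<longrightarrow> \<delta>\<subseteq>V \<longrightarrow> (R \<gamma> \<delta> \<longleftrightarrow> (\<forall>pc\<in>set L. mixed_sat (fst pc) (snd pc) \<gamma> \<delta>)))"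
  unfolding is_rep_def by (simp add: all_set_conv_all_nth)

lemma set_based_list: "set (based_list L) = (\<Union>pc\<in>set L. {fst pc, snd pc})"
  unfolding based_list_def by (induction L) auto

lemma disj_compatible_set: "disj_compatible V (based_list L) \<longleftrightarrow>
  (\<forall>x\<in>V. \<forall>y\<in>V. \<exists>z\<in>V. \<forall>pc\<in>set L. (z \<in> fst pc \<longleftrightarrow> x \<in> fst pc \<or> y \<in> fst pc)
      \<and> (z \<in> snd pc \<longleftrightarrow> x \<in> snd pc \<or> y \<in> snd pc))"
proof -
  have eqv: "\<And>x y z. (\<forall>i<length (based_list L). (z \<in> based_list L ! i) = (x \<in> based_list L ! i \<or> y \<in> based_list L ! i))
     \<longleftrightarrow> (\<forall>pc\<in>set L. (z \<in> fst pc \<longleftrightarrow> x \<in> fst pc \<or> y \<in> fst pc) \<and> (z \<in> snd pc \<longleftrightarrow> x \<in> snd pc \<or> y \<in> snd pc))"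
  proof -
    fix x y z :: 'a
    have "(\<forall>i<length (based_list L). (z \<in> based_list L ! i) = (x \<in> based_list L ! i \<or> y \<in> based_list L ! i))
      \<longleftrightarrow> (\<forall>D\<in>set (based_list L). (z \<in> D) = (x \<in> D \<or> y \<in> D))"
      using all_set_conv_all_nth[of "based_list L" "\<lambda>D. (z \<in> D) = (x \<in> D \<or> y \<in> D)"] by simp
    also have "\<dots> \<longleftrightarrow> (\<forall>pc\<in>set L. (z \<in> fst pc \<longleftrightarrow> x \<in> fst pc \<or> y \<in> fst pc) \<and> (z \<in> snd pc \<longleftrightarrow> x \<in> snd pc \<or> y \<in> snd pc))"
      by (auto simp: set_based_list)
    finally show "?thesis x y z" .
  qed
  then show ?thesis unfolding disj_compatible_def by (simp only: eqv)
qed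

lemma min_no_dom:
  assumes "minimal_rep V one zero R L" "(p,c)\<in>set L" "(p',c')\<in>set L" "(p',c')\<noteq>(p,c)"
    "p \<subseteq> p'" "c' \<subseteq> c"
  shows False
proof -
  obtain k where k: "k < length L" "L!k = (p,c)" using assms(2) by (metis in_set_conv_nth)
  define L' where "L' = take k L @ drop (Suc k) L"
  have "set L = set (take k L @ L!k # drop (Suc k) L)"
    by (rule arg_cong[where f=set, OF id_take_nth_drop[OF k(1)]])
  also have "\<dots> = insert (p,c) (set L')" by (simp add: L'_def k(2))
  finally have sL: "set L = insert (p,c) (set L')" .
  have in': "(p',c') \<in> set L'" using sL assms(3,4) by blast
  have len: "length L' < length L" using k(1) unfolding L'_def by simp
  have rep: "is_rep V one zero R L" using assms(1) unfolding minimal_rep_def by (rule conjunct1)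
  note r = rep[unfolded is_rep_set]
  have des: "\<forall>pc\<in>set L. designated V one zero (fst pc) \<and> designated V one zero (snd pc)"
    using r by (rule conjunct1[OF conjunct2])
  have RL: "\<And>\<gamma> \<delta>. \<gamma>\<subseteq>V \<Longrightarrow> \<delta>\<subseteq>V \<Longrightarrow> R \<gamma> \<delta> \<longleftrightarrow> (\<forall>pc\<in>set L. mixed_sat (fst pc) (snd pc) \<gamma> \<delta>)"
    using r[THEN conjunct2, THEN conjunct2] by blast
  have ms: "\<And>\<gamma> \<delta>. mixed_sat p' c' \<gamma> \<delta> \<Longrightarrow> mixed_sat p c \<gamma> \<delta>"
    using assms(5,6) unfolding mixed_sat_def by blast
  have eq: "\<And>\<gamma> \<delta>. (\<forall>pc\<in>set L. mixed_sat (fst pc) (snd pc) \<gamma> \<delta>) \<longleftrightarrow> (\<forall>pc\<in>set L'. mixed_sat (fst pc) (snd pc) \<gamma> \<delta>)"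
  proof -
    fix \<gamma> \<delta>
    show "(\<forall>pc\<in>set L. mixed_sat (fst pc) (snd pc) \<gamma> \<delta>) \<longleftrightarrow> (\<forall>pc\<in>set L'. mixed_sat (fst pc) (snd pc) \<gamma> \<delta>)"
    proof
      assume "\<forall>pc\<in>set L. mixed_sat (fst pc) (snd pc) \<gamma> \<delta>"
      then show "\<forall>pc\<in>set L'. mixed_sat (fst pc) (snd pc) \<gamma> \<delta>" using sL by simp
    next
      assume h: "\<forall>pc\<in>set L'. mixed_sat (fst pc) (snd pc) \<gamma> \<delta>"
      then have "mixed_sat p' c' \<gamma> \<delta>" using in' by fastforce
      then have "mixed_sat p c \<gamma> \<delta>" by (rule ms)
      then show "\<forall>pc\<in>set L. mixed_sat (fst pc) (snd pc) \<gamma> \<delta>" using h sL by simp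
    qed
  qed
  have "is_rep V one zero R L'"
    unfolding is_rep_set
  proof (intro conjI allI impI)
    show "L' \<noteq> []" using in' by auto
    show "\<forall>pc\<in>set L'. designated V one zero (fst pc) \<and> designated V one zero (snd pc)"
      using des sL by simp
    fix \<gamma> \<delta> assume "\<gamma> \<subseteq> V" "\<delta> \<subseteq> V"
    then show "R \<gamma> \<delta> \<longleftrightarrow> (\<forall>pc\<in>set L'. mixed_sat (fst pc) (snd pc) \<gamma> \<delta>)"
      using RL eq by simp
  qed
  then have "length L \<le> length L'" using assms(1) unfolding minimal_rep_def by blast
  then show False using len by simp
qed

lemma conseq_const:
  assumes "V \<noteq> {}" "\<forall>v. valuation V v \<longrightarrow> eval J v ` \<Gamma> = \<gamma> \<and> eval J v ` \<Delta> = \<delta>"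
  shows "conseq V J R \<Gamma> \<Delta> = R \<gamma> \<delta>"
proof -
  obtain x where "x \<in> V" using assms(1) by blast
  then have "valuation V (\<lambda>_. x)" by (simp add: valuation_def)
  note val = this
  show ?thesis unfolding conseq_def
  proof
    assume "\<forall>v. valuation V v \<longrightarrow> R (eval J v ` \<Gamma>) (eval J v ` \<Delta>)"
    then have "R (eval J (\<lambda>_. x) ` \<Gamma>) (eval J (\<lambda>_. x) ` \<Delta>)" using val by blast
    then show "R \<gamma> \<delta>" using assms(2) val by simp
  next
    assume "R \<gamma> \<delta>"
    then show "\<forall>v. valuation V v \<longrightarrow> R (eval J v ` \<Gamma>) (eval J v ` \<Delta>)" using assms(2) by simp
  qed
qed


lemma G_values:
  assumes "truth_functional V ar I" "constant_expressive V ar I" "V \<noteq> {}"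
    and fV: "\<forall>x\<in>V. \<forall>y\<in>V. f x y \<in> V"
    and G: "\<forall>\<Gamma> \<Delta> A B. (\<forall>C\<in>\<Gamma>. wf (ext_ar ar) C) \<longrightarrow> (\<forall>C\<in>\<Delta>. wf (ext_ar ar) C) \<longrightarrow>
          wf (ext_ar ar) A \<longrightarrow> wf (ext_ar ar) B \<longrightarrow>
          (conseq V (ext_I I f) R \<Gamma> ({Disj A B} \<union> \<Delta>) \<longleftrightarrow> conseq V (ext_I I f) R \<Gamma> ({A, B} \<union> \<Delta>)) \<and>
          (conseq V (ext_I I f) R (\<Gamma> \<union> {Disj A B}) \<Delta> \<longleftrightarrow>
             (conseq V (ext_I I f) R (\<Gamma> \<union> {A}) \<Delta> \<and> conseq V (ext_I I f) R (\<Gamma> \<union> {B}) \<Delta>))"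
  shows "\<And>\<gamma> \<delta> x y. \<gamma> \<subseteq> V \<Longrightarrow> \<delta> \<subseteq> V \<Longrightarrow> x \<in> V \<Longrightarrow> y \<in> V \<Longrightarrow>
            (R \<gamma> ({f x y} \<union> \<delta>) \<longleftrightarrow> R \<gamma> ({x, y} \<union> \<delta>)) \<and>
            (R (\<gamma> \<union> {f x y}) \<delta> \<longleftrightarrow> R (\<gamma> \<union> {x}) \<delta> \<and> R (\<gamma> \<union> {y}) \<delta>)"
proof -
  define J where "J = ext_I I f"
  have "\<forall>x\<in>V. \<exists>A. wf (ext_ar ar) A \<and> (\<forall>v. valuation V v \<longrightarrow> eval J v A = x)"
  proof
    fix x assume "x \<in> V"
    then obtain A where "wf ar A" "\<forall>v. valuation V v \<longrightarrow> eval I v A = x"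
      using assms(2) unfolding constant_expressive_def by blast
    then show "\<exists>A. wf (ext_ar ar) A \<and> (\<forall>v. valuation V v \<longrightarrow> eval J v A = x)"
    proof (intro exI[of _ "lift A"] conjI allI impI)
      show "wf (ext_ar ar) (lift A)" using \<open>wf ar A\<close> by (rule wf_lift)
      fix v assume "valuation V v"
      then show "eval J v (lift A) = x" using \<open>\<forall>v. valuation V v \<longrightarrow> eval I v A = x\<close>
        by (simp add: J_def eval_lift)
    qed
  qed
  from bchoice[OF this] obtain cst where cst: "\<forall>x\<in>V. wf (ext_ar ar) (cst x) \<and> (\<forall>v. valuation V v \<longrightarrow> eval J v (cst x) = x)"
    by blast
  have img: "\<And>v S. valuation V v \<Longrightarrow> S \<subseteq> V \<Longrightarrow> eval J v ` cst ` S = S"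
  proof -
    fix v S assume "valuation V v" "S \<subseteq> V"
    then have "\<forall>x\<in>S. eval J v (cst x) = x" using cst by blast
    then show "eval J v ` cst ` S = S" by (simp add: image_image)
  qed
  have ev: "\<And>v x y. valuation V v \<Longrightarrow> x \<in> V \<Longrightarrow> y \<in> V \<Longrightarrow> eval J v (Disj (cst x) (cst y)) = f x y"
    using cst by (simp add: Disj_def J_def)
  fix \<gamma> \<delta> x y assume h: "\<gamma> \<subseteq> V" "\<delta> \<subseteq> V" "x \<in> V" "y \<in> V"
  have wfs: "\<forall>C\<in>cst ` \<gamma>. wf (ext_ar ar) C" "\<forall>C\<in>cst ` \<delta>. wf (ext_ar ar) C"
    "wf (ext_ar ar) (cst x)" "wf (ext_ar ar) (cst y)" using cst h by auto
  note G' = G[rule_format, OF wfs(1)[rule_format] wfs(2)[rule_format] wfs(3) wfs(4), folded J_def]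
  have xs: "\<And>v. valuation V v \<Longrightarrow> eval J v (cst x) = x" "\<And>v. valuation V v \<Longrightarrow> eval J v (cst y) = y"
    using cst h by auto
  have VV0: "\<And>v. valuation V v \<Longrightarrow> eval J v ` cst ` \<gamma> = \<gamma> \<and> eval J v ` cst ` \<delta> = \<delta> \<and>
      eval J v (cst x) = x \<and> eval J v (cst y) = y \<and> eval J v (Disj (cst x) (cst y)) = f x y"
  proof -
    fix v assume v: "valuation V v"
    show "eval J v ` cst ` \<gamma> = \<gamma> \<and> eval J v ` cst ` \<delta> = \<delta> \<and>
      eval J v (cst x) = x \<and> eval J v (cst y) = y \<and> eval J v (Disj (cst x) (cst y)) = f x y"
      using img[OF v h(1)] img[OF v h(2)] xs(1)[OF v] xs(2)[OF v] ev[OF v h(3) h(4)] by blast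
  qed
  have VV: "\<And>v. valuation V v \<Longrightarrow> eval J v ` cst ` \<gamma> = \<gamma>"
    "\<And>v. valuation V v \<Longrightarrow> eval J v ` cst ` \<delta> = \<delta>"
    "\<And>v. valuation V v \<Longrightarrow> eval J v (cst x) = x"
    "\<And>v. valuation V v \<Longrightarrow> eval J v (cst y) = y"
    "\<And>v. valuation V v \<Longrightarrow> eval J v (Disj (cst x) (cst y)) = f x y"
    using VV0 by blast+
  have e1: "conseq V J R (cst ` \<gamma>) ({Disj (cst x) (cst y)} \<union> cst ` \<delta>) = R \<gamma> ({f x y} \<union> \<delta>)"
    by (rule conseq_const[OF assms(3)]) (simp only: image_Un image_insert image_empty VV simp_thms cong: imp_cong)
  have e2: "conseq V J R (cst ` \<gamma>) ({cst x, cst y} \<union> cst ` \<delta>) = R \<gamma> ({x, y} \<union> \<delta>)"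
    by (rule conseq_const[OF assms(3)]) (simp only: image_Un image_insert image_empty VV simp_thms cong: imp_cong)
  have e3: "conseq V J R (cst ` \<gamma> \<union> {Disj (cst x) (cst y)}) (cst ` \<delta>) = R (\<gamma> \<union> {f x y}) \<delta>"
    by (rule conseq_const[OF assms(3)]) (simp only: image_Un image_insert image_empty VV simp_thms cong: imp_cong)
  have e4: "conseq V J R (cst ` \<gamma> \<union> {cst x}) (cst ` \<delta>) = R (\<gamma> \<union> {x}) \<delta>"
    by (rule conseq_const[OF assms(3)]) (simp only: image_Un image_insert image_empty VV simp_thms cong: imp_cong)
  have e5: "conseq V J R (cst ` \<gamma> \<union> {cst y}) (cst ` \<delta>) = R (\<gamma> \<union> {y}) \<delta>"
    by (rule conseq_const[OF assms(3)]) (simp only: image_Un image_insert image_empty VV simp_thms cong: imp_cong)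
  show "(R \<gamma> ({f x y} \<union> \<delta>) \<longleftrightarrow> R \<gamma> ({x, y} \<union> \<delta>)) \<and>
            (R (\<gamma> \<union> {f x y}) \<delta> \<longleftrightarrow> R (\<gamma> \<union> {x}) \<delta> \<and> R (\<gamma> \<union> {y}) \<delta>)"
  proof
    have g1: "conseq V J R (cst ` \<gamma>) ({Disj (cst x) (cst y)} \<union> cst ` \<delta>) = conseq V J R (cst ` \<gamma>) ({cst x, cst y} \<union> cst ` \<delta>)"
      using G' by (rule conjunct1)
    show "R \<gamma> ({f x y} \<union> \<delta>) \<longleftrightarrow> R \<gamma> ({x, y} \<union> \<delta>)" using g1 unfolding e1 e2 .
    have g2: "conseq V J R (cst ` \<gamma> \<union> {Disj (cst x) (cst y)}) (cst ` \<delta>) = (conseq V J R (cst ` \<gamma> \<union> {cst x}) (cst ` \<delta>) \<and> conseq V J R (cst ` \<gamma> \<union> {cst y}) (cst ` \<delta>))"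
      using G' by (rule conjunct2)
    show "R (\<gamma> \<union> {f x y}) \<delta> \<longleftrightarrow> R (\<gamma> \<union> {x}) \<delta> \<and> R (\<gamma> \<union> {y}) \<delta>" using g2 unfolding e3 e4 e5 .
  qed
qed



lemma notR_iff:
  assumes "R \<gamma> \<delta> = (\<forall>pc\<in>set L. mixed_sat (fst pc) (snd pc) \<gamma> \<delta>)"
  shows "\<not> R \<gamma> \<delta> \<longleftrightarrow> (\<exists>p' c'. (p',c') \<in> set L \<and> \<gamma> \<subseteq> p' \<and> \<delta> \<inter> c' = {})"
proof -
  have "\<not> R \<gamma> \<delta> \<longleftrightarrow> (\<exists>pc\<in>set L. \<gamma> \<subseteq> fst pc \<and> \<delta> \<inter> snd pc = {})"
    using assms unfolding mixed_sat_def by blast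
  also have "\<dots> \<longleftrightarrow> (\<exists>p' c'. (p',c') \<in> set L \<and> \<gamma> \<subseteq> p' \<and> \<delta> \<inter> c' = {})"
  proof
    assume "\<exists>pc\<in>set L. \<gamma> \<subseteq> fst pc \<and> \<delta> \<inter> snd pc = {}"
    then obtain pc where "pc \<in> set L" "\<gamma> \<subseteq> fst pc" "\<delta> \<inter> snd pc = {}" by blast
    then show "\<exists>p' c'. (p',c') \<in> set L \<and> \<gamma> \<subseteq> p' \<and> \<delta> \<inter> c' = {}"
      by (intro exI[of _ "fst pc"] exI[of _ "snd pc"]) simp
  next
    assume "\<exists>p' c'. (p',c') \<in> set L \<and> \<gamma> \<subseteq> p' \<and> \<delta> \<inter> c' = {}"
    then obtain p' c' where "(p',c') \<in> set L" "\<gamma> \<subseteq> p'" "\<delta> \<inter> c' = {}" by blast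
    then show "\<exists>pc\<in>set L. \<gamma> \<subseteq> fst pc \<and> \<delta> \<inter> snd pc = {}" by force
  qed
  finally show ?thesis .
qed

lemma NR_ex:
  assumes "\<not> R \<gamma> \<delta>" "R \<gamma> \<delta> = (\<forall>pc\<in>set L. mixed_sat (fst pc) (snd pc) \<gamma> \<delta>)"
  obtains p' c' where "(p',c') \<in> set L" "\<gamma> \<subseteq> p'" "\<delta> \<inter> c' = {}"
  using assms notR_iff by metis

lemma R_fail:
  assumes "(p,c) \<in> set L" "\<gamma> \<subseteq> p" "\<delta> \<inter> c = {}" "R \<gamma> \<delta> = (\<forall>pc\<in>set L. mixed_sat (fst pc) (snd pc) \<gamma> \<delta>)"
  shows "\<not> R \<gamma> \<delta>"
proof -
  have "\<not> mixed_sat p c \<gamma> \<delta>" using assms(2,3) unfolding mixed_sat_def by blast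
  then show ?thesis using assms(1,4) by fastforce
qed

lemma min_compat:
  assumes min: "minimal_rep V one zero R L"
    and fV: "\<forall>x\<in>V. \<forall>y\<in>V. f x y \<in> V"
    and GV: "\<And>\<gamma> \<delta> x y. \<gamma> \<subseteq> V \<Longrightarrow> \<delta> \<subseteq> V \<Longrightarrow> x \<in> V \<Longrightarrow> y \<in> V \<Longrightarrow>
            (R \<gamma> ({f x y} \<union> \<delta>) \<longleftrightarrow> R \<gamma> ({x, y} \<union> \<delta>)) \<and>
            (R (\<gamma> \<union> {f x y}) \<delta> \<longleftrightarrow> R (\<gamma> \<union> {x}) \<delta> \<and> R (\<gamma> \<union> {y}) \<delta>)"
  shows "disj_compatible V (based_list L)"
  unfolding disj_compatible_set
proof (intro ballI)
  fix x y assume xy: "x \<in> V" "y \<in> V"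
  have rep: "is_rep V one zero R L" using min unfolding minimal_rep_def by (rule conjunct1)
  note r = rep[unfolded is_rep_set]
  have des: "\<forall>pc\<in>set L. designated V one zero (fst pc) \<and> designated V one zero (snd pc)"
    using r by (rule conjunct1[OF conjunct2])
  have RL0: "\<forall>\<gamma> \<delta>. \<gamma>\<subseteq>V \<longrightarrow> \<delta>\<subseteq>V \<longrightarrow> (R \<gamma> \<delta> \<longleftrightarrow> (\<forall>pc\<in>set L. mixed_sat (fst pc) (snd pc) \<gamma> \<delta>))"
    using r by (rule conjunct2[OF conjunct2])
  note RL = RL0[rule_format]
  define z where "z = f x y"
  have zV: "z \<in> V" using fV xy z_def by blast
  have "\<forall>pc\<in>set L. (z \<in> fst pc \<longleftrightarrow> x \<in> fst pc \<or> y \<in> fst pc) \<and> (z \<in> snd pc \<longleftrightarrow> x \<in> snd pc \<or> y \<in> snd pc)"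
  proof
    fix pc assume pcL: "pc \<in> set L"
    obtain p c where pc: "pc = (p, c)" by fastforce
    have pcL': "(p, c) \<in> set L" using pcL pc by simp
    have "designated V one zero p \<and> designated V one zero c" using des pcL' by fastforce
    then have pV: "p \<subseteq> V" and cV: "c \<subseteq> V" unfolding designated_def by auto
    have dV: "V - c \<subseteq> V" by blast
    have pxV: "p \<union> {x} \<subseteq> V" "p \<union> {y} \<subseteq> V" "p \<union> {z} \<subseteq> V" "{x,y} \<union> (V - c) \<subseteq> V" "{z} \<union> (V - c) \<subseteq> V"
      using pV xy zV by auto
    note GG = GV[OF pV dV xy, folded z_def]
    have G1: "R p ({z} \<union> (V - c)) \<longleftrightarrow> R p ({x, y} \<union> (V - c))"
      using GG by (rule conjunct1)
    have G2: "R (p \<union> {z}) (V - c) \<longleftrightarrow> R (p \<union> {x}) (V - c) \<and> R (p \<union> {y}) (V - c)"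
      using GG by (rule conjunct2)
    have dom: "\<And>p' c'. (p',c') \<in> set L \<Longrightarrow> (p',c') \<noteq> (p,c) \<Longrightarrow> p \<subseteq> p' \<Longrightarrow> c' \<subseteq> c \<Longrightarrow> False"
      by (rule min_no_dom[OF min pcL'])
    have c'c: "\<And>p' c' S. (p',c') \<in> set L \<Longrightarrow> S \<inter> c' = {} \<Longrightarrow> V - c \<subseteq> S \<Longrightarrow> c' \<subseteq> c"
    proof -
      fix p' c' S assume a: "(p',c') \<in> set L" "S \<inter> c' = {}" "V - c \<subseteq> S"
      have "designated V one zero c'" using des a(1) by fastforce
      then have "c' \<subseteq> V" unfolding designated_def by blast
      then show "c' \<subseteq> c" using a(2,3) by blast
    qed
    have C: "z \<in> c \<longleftrightarrow> x \<in> c \<or> y \<in> c"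
    proof
      assume zc: "z \<in> c"
      show "x \<in> c \<or> y \<in> c"
      proof (rule ccontr)
        assume "\<not> (x \<in> c \<or> y \<in> c)"
        then have "({x, y} \<union> (V - c)) \<inter> c = {}" by blast
        then have "\<not> R p ({x, y} \<union> (V - c))" by (rule R_fail[where R=R, OF pcL' subset_refl _ RL[OF pV pxV(4)]])
        then have "\<not> R p ({z} \<union> (V - c))" using G1 by simp
        then obtain p' c' where a: "(p',c') \<in> set L" "p \<subseteq> p'" "({z} \<union> (V - c)) \<inter> c' = {}"
          using NR_ex RL[OF pV pxV(5)] by metis
        have "c' \<subseteq> c" using c'c[OF a(1) a(3)] by blast
        moreover have "(p',c') \<noteq> (p,c)" using a(3) zc by blast
        ultimately show False using dom[OF a(1) _ a(2)] by blast
      qed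
    next
      assume xyc: "x \<in> c \<or> y \<in> c"
      show "z \<in> c"
      proof (rule ccontr)
        assume zc: "z \<notin> c"
        then have "({z} \<union> (V - c)) \<inter> c = {}" by blast
        then have "\<not> R p ({z} \<union> (V - c))" by (rule R_fail[where R=R, OF pcL' subset_refl _ RL[OF pV pxV(5)]])
        then have "\<not> R p ({x, y} \<union> (V - c))" using G1 by simp
        then obtain p' c' where a: "(p',c') \<in> set L" "p \<subseteq> p'" "({x, y} \<union> (V - c)) \<inter> c' = {}"
          using NR_ex RL[OF pV pxV(4)] by metis
        have "c' \<subseteq> c" using c'c[OF a(1) a(3)] by blast
        moreover have "x \<notin> c'" "y \<notin> c'" using a(3) by auto
        then have "(p',c') \<noteq> (p,c)" using xyc by auto
        ultimately show False using dom[OF a(1) _ a(2)] by blast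
      qed
    qed
    have "(V - c) \<inter> c = {}" by blast
    then have nR: "\<not> R p (V - c)" by (rule R_fail[where R=R, OF pcL' subset_refl _ RL[OF pV dV]])
    have P: "z \<in> p \<longleftrightarrow> x \<in> p \<or> y \<in> p"
    proof
      assume zp: "z \<in> p"
      show "x \<in> p \<or> y \<in> p"
      proof (rule ccontr)
        assume nxy: "\<not> (x \<in> p \<or> y \<in> p)"
        have "p \<union> {z} = p" using zp by blast
        then have "\<not> R (p \<union> {x}) (V - c) \<or> \<not> R (p \<union> {y}) (V - c)" using G2 nR by simp
        then obtain w where w: "w = x \<or> w = y" "\<not> R (p \<union> {w}) (V - c)"
          by (elim disjE) (rule that; simp)+
        then have wV: "p \<union> {w} \<subseteq> V" using pxV by blast
        obtain p' c' where a: "(p',c') \<in> set L" "p \<union> {w} \<subseteq> p'" "(V - c) \<inter> c' = {}"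
          using NR_ex w(2) RL[OF wV dV] by metis
        have "c' \<subseteq> c" using c'c[OF a(1) a(3)] by blast
        moreover have "(p',c') \<noteq> (p,c)" using a(2) nxy w(1) by blast
        moreover have "p \<subseteq> p'" using a(2) by blast
        ultimately show False using dom[OF a(1)] by blast
      qed
    next
      assume xyp: "x \<in> p \<or> y \<in> p"
      show "z \<in> p"
      proof (rule ccontr)
        assume zp: "z \<notin> p"
        have "p \<union> {x} = p \<or> p \<union> {y} = p" using xyp by blast
        then have "\<not> R (p \<union> {x}) (V - c) \<or> \<not> R (p \<union> {y}) (V - c)"
          using nR by (elim disjE) simp_all
        then have "\<not> R (p \<union> {z}) (V - c)" using G2 by simp
        then obtain p' c' where a: "(p',c') \<in> set L" "p \<union> {z} \<subseteq> p'" "(V - c) \<inter> c' = {}"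
          using NR_ex RL[OF pxV(3) dV] by metis
        have "c' \<subseteq> c" using c'c[OF a(1) a(3)] by blast
        moreover have "(p',c') \<noteq> (p,c)" using a(2) zp by blast
        moreover have "p \<subseteq> p'" using a(2) by blast
        ultimately show False using dom[OF a(1)] by blast
      qed
    qed
    show "(z \<in> fst pc \<longleftrightarrow> x \<in> fst pc \<or> y \<in> fst pc) \<and> (z \<in> snd pc \<longleftrightarrow> x \<in> snd pc \<or> y \<in> snd pc)"
      using C P pc by simp
  qed
  then show "\<exists>z\<in>V. \<forall>pc\<in>set L. (z \<in> fst pc \<longleftrightarrow> x \<in> fst pc \<or> y \<in> fst pc) \<and> (z \<in> snd pc \<longleftrightarrow> x \<in> snd pc \<or> y \<in> snd pc)"
    using zV by blast
qed



lemma ms_right: "(z \<in> c \<longleftrightarrow> a \<in> c \<or> b \<in> c) \<Longrightarrow>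
  mixed_sat p c \<gamma> ({z} \<union> \<delta>) = mixed_sat p c \<gamma> ({a, b} \<union> \<delta>)"
  unfolding mixed_sat_def by auto

lemma ms_left: "(z \<in> p \<longleftrightarrow> a \<in> p \<or> b \<in> p) \<Longrightarrow>
  mixed_sat p c (\<gamma> \<union> {z}) \<delta> = (mixed_sat p c (\<gamma> \<union> {a}) \<delta> \<and> mixed_sat p c (\<gamma> \<union> {b}) \<delta>)"
  unfolding mixed_sat_def by auto

lemma compat_G:
  assumes rep: "is_rep V one zero R L" and dc: "disj_compatible V (based_list L)"
    and tf: "truth_functional V ar I"
  shows "admits_G_disjunction V R ar I"
proof -
  have RL: "\<And>\<gamma> \<delta>. \<gamma>\<subseteq>V \<Longrightarrow> \<delta>\<subseteq>V \<Longrightarrow> R \<gamma> \<delta> = (\<forall>pc\<in>set L. mixed_sat (fst pc) (snd pc) \<gamma> \<delta>)"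
    using rep[unfolded is_rep_set] by blast
  define Q where "Q = (\<lambda>x y z. \<forall>pc\<in>set L. (z \<in> fst pc \<longleftrightarrow> x \<in> fst pc \<or> y \<in> fst pc)
      \<and> (z \<in> snd pc \<longleftrightarrow> x \<in> snd pc \<or> y \<in> snd pc))"
  have ex: "\<forall>x\<in>V. \<forall>y\<in>V. \<exists>z\<in>V. Q x y z" using dc unfolding disj_compatible_set Q_def .
  define f where "f = (\<lambda>x y. SOME z. z \<in> V \<and> Q x y z)"
  have fQ: "\<And>x y. x \<in> V \<Longrightarrow> y \<in> V \<Longrightarrow> f x y \<in> V \<and> Q x y (f x y)"
  proof -
    fix x y assume "x \<in> V" "y \<in> V"
    then have "\<exists>z. z \<in> V \<and> Q x y z" using ex by blast
    then show "f x y \<in> V \<and> Q x y (f x y)" unfolding f_def by (rule someI_ex)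
  qed
  have fV: "\<forall>x\<in>V. \<forall>y\<in>V. f x y \<in> V" using fQ by blast
  have PR: "\<And>\<gamma> \<delta> a b. \<gamma>\<subseteq>V \<Longrightarrow> \<delta>\<subseteq>V \<Longrightarrow> a \<in> V \<Longrightarrow> b \<in> V \<Longrightarrow>
      R \<gamma> ({f a b} \<union> \<delta>) = R \<gamma> ({a, b} \<union> \<delta>)"
  proof -
    fix \<gamma> \<delta> a b assume h: "\<gamma>\<subseteq>V" "\<delta>\<subseteq>V" "a \<in> V" "b \<in> V"
    have q: "Q a b (f a b)" and z: "f a b \<in> V" using fQ[OF h(3,4)] by auto
    have s1: "{f a b} \<union> \<delta> \<subseteq> V" "{a, b} \<union> \<delta> \<subseteq> V" using h z by auto
    have "(\<forall>pc\<in>set L. mixed_sat (fst pc) (snd pc) \<gamma> ({f a b} \<union> \<delta>)) = (\<forall>pc\<in>set L. mixed_sat (fst pc) (snd pc) \<gamma> ({a, b} \<union> \<delta>))"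
    proof (rule ball_cong[OF refl])
      fix pc assume "pc \<in> set L"
      then have "f a b \<in> snd pc \<longleftrightarrow> a \<in> snd pc \<or> b \<in> snd pc" using q unfolding Q_def by blast
      then show "mixed_sat (fst pc) (snd pc) \<gamma> ({f a b} \<union> \<delta>) = mixed_sat (fst pc) (snd pc) \<gamma> ({a, b} \<union> \<delta>)"
        by (rule ms_right)
    qed
    then show "R \<gamma> ({f a b} \<union> \<delta>) = R \<gamma> ({a, b} \<union> \<delta>)" using RL[OF h(1) s1(1)] RL[OF h(1) s1(2)] by simp
  qed
  have PL: "\<And>\<gamma> \<delta> a b. \<gamma>\<subseteq>V \<Longrightarrow> \<delta>\<subseteq>V \<Longrightarrow> a \<in> V \<Longrightarrow> b \<in> V \<Longrightarrow>
      R (\<gamma> \<union> {f a b}) \<delta> = (R (\<gamma> \<union> {a}) \<delta> \<and> R (\<gamma> \<union> {b}) \<delta>)"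
  proof -
    fix \<gamma> \<delta> a b assume h: "\<gamma>\<subseteq>V" "\<delta>\<subseteq>V" "a \<in> V" "b \<in> V"
    have q: "Q a b (f a b)" and z: "f a b \<in> V" using fQ[OF h(3,4)] by auto
    have s1: "\<gamma> \<union> {f a b} \<subseteq> V" "\<gamma> \<union> {a} \<subseteq> V" "\<gamma> \<union> {b} \<subseteq> V" using h z by auto
    have "(\<forall>pc\<in>set L. mixed_sat (fst pc) (snd pc) (\<gamma> \<union> {f a b}) \<delta>) =
       (\<forall>pc\<in>set L. mixed_sat (fst pc) (snd pc) (\<gamma> \<union> {a}) \<delta> \<and> mixed_sat (fst pc) (snd pc) (\<gamma> \<union> {b}) \<delta>)"
    proof (rule ball_cong[OF refl])
      fix pc assume "pc \<in> set L"
      then have "f a b \<in> fst pc \<longleftrightarrow> a \<in> fst pc \<or> b \<in> fst pc" using q unfolding Q_def by blast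
      then show "mixed_sat (fst pc) (snd pc) (\<gamma> \<union> {f a b}) \<delta> = (mixed_sat (fst pc) (snd pc) (\<gamma> \<union> {a}) \<delta> \<and> mixed_sat (fst pc) (snd pc) (\<gamma> \<union> {b}) \<delta>)"
        by (rule ms_left)
    qed
    then show "R (\<gamma> \<union> {f a b}) \<delta> = (R (\<gamma> \<union> {a}) \<delta> \<and> R (\<gamma> \<union> {b}) \<delta>)"
      using RL[OF s1(1) h(2)] RL[OF s1(2) h(2)] RL[OF s1(3) h(2)] by (simp add: ball_conj_distrib)
  qed
  define J where "J = ext_I I f"
  have evV: "\<And>v A. valuation V v \<Longrightarrow> wf (ext_ar ar) A \<Longrightarrow> eval J v A \<in> V"
    unfolding J_def using eval_in_V[OF tf fV] by blast
  have evD: "\<And>v A B. eval J v (Disj A B) = f (eval J v A) (eval J v B)"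
    by (simp add: J_def Disj_def)
  show ?thesis unfolding admits_G_disjunction_def
  proof (intro exI[of _ f] conjI fV allI impI)
    fix \<Gamma> \<Delta> A B
    assume wG: "\<forall>C\<in>\<Gamma>. wf (ext_ar ar) C" and wD: "\<forall>C\<in>\<Delta>. wf (ext_ar ar) C"
      and wA: "wf (ext_ar ar) A" and wB: "wf (ext_ar ar) B"
    have sub: "\<And>v S. valuation V v \<Longrightarrow> \<forall>C\<in>S. wf (ext_ar ar) C \<Longrightarrow> eval J v ` S \<subseteq> V"
      using evV by blast
    have eq1: "\<And>v. valuation V v \<Longrightarrow> R (eval J v ` \<Gamma>) (eval J v ` ({Disj A B} \<union> \<Delta>)) = R (eval J v ` \<Gamma>) (eval J v ` ({A, B} \<union> \<Delta>))"
    proof -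
      fix v assume v: "valuation V v"
      have i1: "eval J v ` ({Disj A B} \<union> \<Delta>) = {f (eval J v A) (eval J v B)} \<union> eval J v ` \<Delta>"
        by (simp add: evD)
      have i2: "eval J v ` ({A, B} \<union> \<Delta>) = {eval J v A, eval J v B} \<union> eval J v ` \<Delta>" by simp
      show "?thesis v" unfolding i1 i2
        by (rule PR[OF sub[OF v wG] sub[OF v wD] evV[OF v wA] evV[OF v wB]])
    qed
    have eq2: "\<And>v. valuation V v \<Longrightarrow> R (eval J v ` (\<Gamma> \<union> {Disj A B})) (eval J v ` \<Delta>) =
       (R (eval J v ` (\<Gamma> \<union> {A})) (eval J v ` \<Delta>) \<and> R (eval J v ` (\<Gamma> \<union> {B})) (eval J v ` \<Delta>))"
    proof -
      fix v assume v: "valuation V v"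
      have i1: "eval J v ` (\<Gamma> \<union> {Disj A B}) = eval J v ` \<Gamma> \<union> {f (eval J v A) (eval J v B)}"
        by (simp add: evD)
      have i2: "eval J v ` (\<Gamma> \<union> {A}) = eval J v ` \<Gamma> \<union> {eval J v A}" "eval J v ` (\<Gamma> \<union> {B}) = eval J v ` \<Gamma> \<union> {eval J v B}" by simp_all
      show "?thesis v" unfolding i1 i2
        by (rule PL[OF sub[OF v wG] sub[OF v wD] evV[OF v wA] evV[OF v wB]])
    qed
    show "conseq V (ext_I I f) R \<Gamma> ({Disj A B} \<union> \<Delta>) = conseq V (ext_I I f) R \<Gamma> ({A, B} \<union> \<Delta>)"
      unfolding conseq_def J_def[symmetric] using eq1 by blast
    show "conseq V (ext_I I f) R (\<Gamma> \<union> {Disj A B}) \<Delta> =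
          (conseq V (ext_I I f) R (\<Gamma> \<union> {A}) \<Delta> \<and> conseq V (ext_I I f) R (\<Gamma> \<union> {B}) \<Delta>)"
      unfolding conseq_def J_def[symmetric] using eq2 by blast
  qed
qed

lemma exists_minimal:
  assumes "intersective_mixed V one zero R"
  shows "\<exists>L. minimal_rep V one zero R L"
proof -
  define n where "n = (LEAST n. \<exists>L. is_rep V one zero R L \<and> length L = n)"
  have "\<exists>n L. is_rep V one zero R L \<and> length L = n" using assms unfolding intersective_mixed_def by blast
  then have "\<exists>L. is_rep V one zero R L \<and> length L = n" unfolding n_def by (rule LeastI_ex)
  then obtain L where L: "is_rep V one zero R L" "length L = n" by blast
  have "\<And>L'. is_rep V one zero R L' \<Longrightarrow> length L \<le> length L'"
    unfolding L(2) n_def by (rule Least_le) blast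
  then show ?thesis using L(1) unfolding minimal_rep_def by blast
qed


theorem theorem7p2:
  fixes V :: "'v set" and one zero :: 'v
    and R :: "'v set \<Rightarrow> 'v set \<Rightarrow> bool"
    and ar :: "'c \<Rightarrow> nat" and I :: "'c \<Rightarrow> 'v list \<Rightarrow> 'v"
  assumes "finite V" and "one \<in> V" and "zero \<in> V" and "one \<noteq> zero"
    and "intersective_mixed V one zero R"
    and "truth_functional V ar I"
    and "constant_expressive V ar I"
  shows "(admits_G_disjunction V R ar I \<longleftrightarrow>
            (\<forall>L. minimal_rep V one zero R L \<longrightarrow> disj_compatible V (based_list L)))
       \<and> ((\<forall>L. minimal_rep V one zero R L \<longrightarrow> disj_compatible V (based_list L)) \<longleftrightarrow>
            (\<exists>L. is_rep V one zero R L \<and> disj_compatible V (based_list L)))"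
proof -
  have Vne: "V \<noteq> {}" using assms(2) by blast
  have i_ii: "\<forall>L. minimal_rep V one zero R L \<longrightarrow> disj_compatible V (based_list L)"
    if adm: "admits_G_disjunction V R ar I"
  proof (intro allI impI)
    fix L assume min: "minimal_rep V one zero R L"
    obtain f where fV: "\<forall>x\<in>V. \<forall>y\<in>V. f x y \<in> V"
      and G: "\<forall>\<Gamma> \<Delta> A B. (\<forall>C\<in>\<Gamma>. wf (ext_ar ar) C) \<longrightarrow> (\<forall>C\<in>\<Delta>. wf (ext_ar ar) C) \<longrightarrow>
          wf (ext_ar ar) A \<longrightarrow> wf (ext_ar ar) B \<longrightarrow>
          (conseq V (ext_I I f) R \<Gamma> ({Disj A B} \<union> \<Delta>) \<longleftrightarrow> conseq V (ext_I I f) R \<Gamma> ({A, B} \<union> \<Delta>)) \<and>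
          (conseq V (ext_I I f) R (\<Gamma> \<union> {Disj A B}) \<Delta> \<longleftrightarrow>
             (conseq V (ext_I I f) R (\<Gamma> \<union> {A}) \<Delta> \<and> conseq V (ext_I I f) R (\<Gamma> \<union> {B}) \<Delta>))"
      using adm unfolding admits_G_disjunction_def by (elim exE conjE)
    show "disj_compatible V (based_list L)"
      by (rule min_compat[OF min fV G_values[OF assms(6) assms(7) Vne fV G]])
  qed
  have ii_iii: "\<exists>L. is_rep V one zero R L \<and> disj_compatible V (based_list L)"
    if h: "\<forall>L. minimal_rep V one zero R L \<longrightarrow> disj_compatible V (based_list L)"
  proof -
    obtain L where "minimal_rep V one zero R L" using exists_minimal[OF assms(5)] by blast
    then show ?thesis using h unfolding minimal_rep_def by blast
  qed
  have iii_i: "admits_G_disjunction V R ar I"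
    if h: "\<exists>L. is_rep V one zero R L \<and> disj_compatible V (based_list L)"
  proof -
    obtain L where L: "is_rep V one zero R L" "disj_compatible V (based_list L)" using h by blast
    show ?thesis by (rule compat_G[OF L assms(6)])
  qed
  show ?thesis using i_ii ii_iii iii_i by blast
qed

end
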